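(* For each $n\in\mathbb{N}_+$ fix integers $2\le d_{n,1}\le\cdots\le d_{n,n}$. For each $n$ let $X^{(n,1)},\ldots,X^{(n,n)}$ be independent random variables with $X^{(n,i)}$ uniformly distributed on $\{0,1,\ldots,d_{n,i}-1\}$, and set $X^{(n)}=\sum_{i=1}^n X^{(n,i)}$. Then $X^{(n)}$ satisfies the CLT if and only if it satisfies the maximum condition.
   Context: The maximum condition means $\max_i \mathbb{V}(X^{(n,i)})/\mathbb{V}(X^{(n)})\to0$ as $n\to\infty$. A sequence $X^{(n)}$ satisfies the CLT if $(X^{(n)}-\mathbb{E}X^{(n)})/\sqrt{\mathbb{V}X^{(n)}}$ converges in distribution to $N(0,1)$. *)

theory Defs
  imports "HOL-Probability.Probability"
begin

definition satisfies_CLT :: "(nat \<Rightarrow> 'a measure) \<Rightarrow> (nat \<Rightarrow> 'a \<Rightarrow> real) \<Rightarrow> bool" where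
  "satisfies_CLT M Y \<longleftrightarrow>
     weak_conv_m
       (\<lambda>n. distr (M n) borel
          (\<lambda>\<omega>. (Y n \<omega> - prob_space.expectation (M n) (Y n))
                 / sqrt (prob_space.variance (M n) (Y n))))
       std_normal_distribution"

definition maximum_condition :: "(nat \<Rightarrow> 'a measure) \<Rightarrow> (nat \<Rightarrow> nat \<Rightarrow> 'a \<Rightarrow> real) \<Rightarrow> bool" where
  "maximum_condition M X \<longleftrightarrow>
     (\<lambda>n. (MAX i\<in>{1..n}. prob_space.variance (M n) (X n i))
            / prob_space.variance (M n) (\<lambda>\<omega>. \<Sum>i\<in>{1..n}. X n i \<omega>)) \<longlonglongrightarrow> 0"

end

theory Submission
  imports Defs
begin



lemma unif_integral:
  fixes f :: "int \<Rightarrow> 'b::{banach, second_countable_topology}"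
  assumes "prob_space M" and Xm: "X \<in> M \<rightarrow>\<^sub>M count_space UNIV"
    and dX: "distr M (count_space UNIV) X = measure_pmf (pmf_of_set {0..<D})" and D: "D \<ge> 1"
  shows "integral\<^sup>L M (\<lambda>\<omega>. f (X \<omega>)) = inverse (real_of_int D) *\<^sub>R (\<Sum>k\<in>{0..<D}. f k)"
proof -
  have "integral\<^sup>L M (\<lambda>\<omega>. f (X \<omega>)) = integral\<^sup>L (distr M (count_space UNIV) X) f"
    by (rule integral_distr[symmetric]) (use Xm in auto)
  also have "\<dots> = (\<Sum>a\<in>{0..<D}. pmf (pmf_of_set {0..<D}) a *\<^sub>R f a)"
    unfolding dX using D by (intro integral_measure_pmf) auto
  also have "\<dots> = inverse (real_of_int D) *\<^sub>R (\<Sum>k\<in>{0..<D}. f k)"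
    using D by (simp add: scaleR_sum_right divide_inverse)
  finally show ?thesis .
qed

lemma unif_integrable:
  fixes f :: "int \<Rightarrow> 'b::{banach, second_countable_topology}"
  assumes "prob_space M" and Xm: "X \<in> M \<rightarrow>\<^sub>M count_space UNIV"
    and dX: "distr M (count_space UNIV) X = measure_pmf (pmf_of_set {0..<D})" and D: "D \<ge> 1"
  shows "integrable M (\<lambda>\<omega>. f (X \<omega>))"
proof -
  have "integrable (distr M (count_space UNIV) X) f"
    unfolding dX using D by (intro integrable_measure_pmf_finite) auto
  then show ?thesis using Xm by (subst (asm) integrable_distr_eq) auto
qed




lemma sum_int_nat: "(\<Sum>k\<in>{0..<int N}. g k) = (\<Sum>j<N. g (int j))"
proof -
  have "{0..<int N} = int ` {..<N}" using image_int_atLeastLessThan[of 0 N] by (simp add: lessThan_atLeast0)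
  then show ?thesis by (simp add: sum.reindex)
qed

lemma S1: "(\<Sum>j<N. real j) = real N * (real N - 1) / 2"
  by (induction N) (auto simp: field_simps)

lemma S2: "(\<Sum>j<N. (real j)^2) = (real N - 1) * real N * (2 * real N - 1) / 6"
  by (induction N) (auto simp: field_simps power2_eq_square)

lemma S0: "(\<Sum>j<N. real j - (real N - 1)/2) = 0"
proof -
  have "(\<Sum>j<N. real j - (real N - 1)/2) = (\<Sum>j<N. real j) - real N * ((real N - 1)/2)"
    by (simp add: sum_subtractf)
  then show ?thesis by (simp add: S1 field_simps)
qed

lemma S3: "(\<Sum>j<N. (real j - (real N - 1)/2)^2) = real N * ((real N)^2 - 1) / 12"
proof -
  have "(\<Sum>j<N. (real j - (real N - 1)/2)^2) = (\<Sum>j<N. (real j)^2 - (real N - 1) * real j + ((real N - 1)/2)^2)"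
    by (intro sum.cong) (auto simp: power2_eq_square field_simps)
  also have "\<dots> = (\<Sum>j<N. (real j)^2) - (real N - 1) * (\<Sum>j<N. real j) + real N * ((real N - 1)/2)^2"
    by (simp add: sum.distrib sum_subtractf sum_distrib_left)
  also have "\<dots> = real N * ((real N)^2 - 1) / 12"
    by (simp only: S1 S2) (simp add: field_simps power2_eq_square)
  finally show ?thesis .
qed

lemma U0: assumes "D \<ge> 0" shows "(\<Sum>k\<in>{0..<D}. real_of_int k - (real_of_int D - 1)/2) = 0"
proof -
  obtain N where "D = int N" using assms by (metis nonneg_int_cases)
  then show ?thesis using S0[of N] by (simp add: sum_int_nat)
qed

lemma U1: assumes "D \<ge> 0" shows "(\<Sum>k\<in>{0..<D}. real_of_int k) = real_of_int D * (real_of_int D - 1) / 2"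
proof -
  obtain N where "D = int N" using assms by (metis nonneg_int_cases)
  then show ?thesis using S1[of N] by (simp add: sum_int_nat)
qed

lemma U2: assumes "D \<ge> 0" shows "(\<Sum>k\<in>{0..<D}. (real_of_int k - (real_of_int D - 1)/2)^2) = real_of_int D * ((real_of_int D)^2 - 1) / 12"
proof -
  obtain N where "D = int N" using assms by (metis nonneg_int_cases)
  then show ?thesis using S3[of N] by (simp add: sum_int_nat)
qed




definition phi :: "int \<Rightarrow> real \<Rightarrow> complex" where
  "phi D s = inverse (real_of_int D) *\<^sub>R (\<Sum>k\<in>{0..<D}. iexp (s * (real_of_int k - (real_of_int D - 1)/2)))"

locale urow = prob_space +
  fixes X :: "nat \<Rightarrow> 'a \<Rightarrow> int" and d :: "nat \<Rightarrow> int" and n :: nat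
  assumes ind: "indep_vars (\<lambda>_. count_space UNIV) X {1..n}"
    and unif: "\<And>i. i \<in> {1..n} \<Longrightarrow> distr M (count_space UNIV) (X i) = measure_pmf (pmf_of_set {0..<d i})"
    and dpos: "\<And>i. i \<in> {1..n} \<Longrightarrow> 1 \<le> d i"
begin

definition mu :: "nat \<Rightarrow> real" where "mu i = (real_of_int (d i) - 1) / 2"
definition v :: "nat \<Rightarrow> real" where "v i = ((real_of_int (d i))^2 - 1) / 12"
definition Y :: "nat \<Rightarrow> 'a \<Rightarrow> real" where "Y i \<omega> = real_of_int (X i \<omega>) - mu i"

lemma Xm: "i \<in> {1..n} \<Longrightarrow> X i \<in> M \<rightarrow>\<^sub>M count_space UNIV"
  using ind unfolding indep_vars_def2 by auto

lemma Iint: "i \<in> {1..n} \<Longrightarrow> integral\<^sup>L M (\<lambda>\<omega>. f (X i \<omega>)) = inverse (real_of_int (d i)) *\<^sub>R (\<Sum>k\<in>{0..<d i}. f k)"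
  for f :: "int \<Rightarrow> 'b::{banach, second_countable_topology}"
  by (rule unif_integral[OF prob_space_axioms Xm unif dpos])

lemma Iable: "i \<in> {1..n} \<Longrightarrow> integrable M (\<lambda>\<omega>. f (X i \<omega>))"
  for f :: "int \<Rightarrow> 'b::{banach, second_countable_topology}"
  by (rule unif_integrable[OF prob_space_axioms Xm unif dpos])

lemma EX: "i \<in> {1..n} \<Longrightarrow> expectation (\<lambda>\<omega>. real_of_int (X i \<omega>)) = mu i"
proof -
  assume i: "i \<in> {1..n}"
  have "real_of_int (d i) \<noteq> 0" using dpos[OF i] by simp
  have "expectation (\<lambda>\<omega>. real_of_int (X i \<omega>)) = inverse (real_of_int (d i)) * (real_of_int (d i) * (real_of_int (d i) - 1) / 2)"
    using Iint[OF i, of real_of_int] U1[of "d i"] dpos[OF i] by simp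
  also have "\<dots> = mu i" using \<open>real_of_int (d i) \<noteq> 0\<close> by (simp add: mu_def)
  finally show ?thesis .
qed

lemma EY: "i \<in> {1..n} \<Longrightarrow> expectation (Y i) = 0"
  using Iint[of i "\<lambda>k. real_of_int k - mu i"] U0[of "d i"] dpos[of i] unfolding Y_def
  by (simp add: mu_def)

lemma EY2: "i \<in> {1..n} \<Longrightarrow> expectation (\<lambda>\<omega>. (Y i \<omega>)^2) = v i"
proof -
  assume i: "i \<in> {1..n}"
  have "real_of_int (d i) \<noteq> 0" using dpos[OF i] by simp
  have "expectation (\<lambda>\<omega>. (Y i \<omega>)^2) = inverse (real_of_int (d i)) * (real_of_int (d i) * ((real_of_int (d i))^2 - 1) / 12)"
    using Iint[OF i, of "\<lambda>k. (real_of_int k - mu i)^2"] U2[of "d i"] dpos[OF i] unfolding Y_def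
    by (simp add: mu_def)
  also have "\<dots> = v i" using \<open>real_of_int (d i) \<noteq> 0\<close> by (simp add: v_def)
  finally show ?thesis .
qed

lemma VX: "i \<in> {1..n} \<Longrightarrow> variance (\<lambda>\<omega>. real_of_int (X i \<omega>)) = v i"
  using EY2[of i] EX[of i] unfolding Y_def by simp

lemma Yable: "i \<in> {1..n} \<Longrightarrow> integrable M (Y i)"
  using Iable[of i "\<lambda>k. real_of_int k - mu i"] unfolding Y_def by simp

lemma Y2able: "i \<in> {1..n} \<Longrightarrow> integrable M (\<lambda>\<omega>. (Y i \<omega>)^2)"
  using Iable[of i "\<lambda>k. (real_of_int k - mu i)^2"] unfolding Y_def by simp

lemma Ym[measurable]: "i \<in> {1..n} \<Longrightarrow> Y i \<in> borel_measurable M"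
  using Yable by auto

lemma indY: "indep_vars (\<lambda>_. borel) Y {1..n}"
  unfolding Y_def by (rule indep_vars_compose2[OF ind]) auto

lemma sumY: "I \<subseteq> {1..n} \<Longrightarrow> integrable M (\<lambda>\<omega>. (\<Sum>i\<in>I. Y i \<omega>)^2) \<and>
   integrable M (\<lambda>\<omega>. \<Sum>i\<in>I. Y i \<omega>) \<and> expectation (\<lambda>\<omega>. \<Sum>i\<in>I. Y i \<omega>) = 0 \<and>
   expectation (\<lambda>\<omega>. (\<Sum>i\<in>I. Y i \<omega>)^2) = (\<Sum>i\<in>I. v i)"
proof (induction I rule: infinite_finite_induct)
  case (infinite A)
  then show ?case using finite_subset[of A "{1..n}"] by auto
next
  case empty
  then show ?case by (simp add: prob_space)
next
  case (insert x F)
  let ?T = "\<lambda>\<omega>. \<Sum>i\<in>F. Y i \<omega>"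
  have x: "x \<in> {1..n}" and F: "F \<subseteq> {1..n}" using insert by auto
  note IH = insert(3)[OF F]
  have iv: "indep_var borel (Y x) borel ?T"
    using indep_vars_subset[OF indY insert(4)] insert(1,2) by (intro indep_vars_sum) auto
  have YT: "integrable M (\<lambda>\<omega>. Y x \<omega> * ?T \<omega>)"
    using indep_var_integrable[OF iv Yable[OF x]] IH by auto
  have EYT: "expectation (\<lambda>\<omega>. Y x \<omega> * ?T \<omega>) = 0"
    using indep_var_lebesgue_integral[OF iv Yable[OF x]] IH EY[OF x] by auto
  have eq: "(\<lambda>\<omega>. (\<Sum>i\<in>insert x F. Y i \<omega>)^2) = (\<lambda>\<omega>. (Y x \<omega>)^2 + 2 * (Y x \<omega> * ?T \<omega>) + (?T \<omega>)^2)"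
    using insert(1,2) by (auto simp: power2_eq_square field_simps)
  have eq1: "(\<lambda>\<omega>. (\<Sum>i\<in>insert x F. Y i \<omega>)) = (\<lambda>\<omega>. Y x \<omega> + ?T \<omega>)"
    using insert(1,2) by auto
  show ?case
    unfolding eq eq1 using IH YT EYT Y2able[OF x] Yable[OF x] EY[OF x] EY2[OF x] insert(1,2)
    by (simp add: Bochner_Integration.integral_add)
qed

definition S :: "'a \<Rightarrow> real" where "S \<omega> = (\<Sum>i\<in>{1..n}. real_of_int (X i \<omega>))"
definition V :: real where "V = (\<Sum>i\<in>{1..n}. v i)"

lemma S_eq: "S \<omega> = (\<Sum>i\<in>{1..n}. Y i \<omega>) + (\<Sum>i\<in>{1..n}. mu i)"
  unfolding S_def Y_def by (simp add: sum_subtractf)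

lemma ES: "expectation S = (\<Sum>i\<in>{1..n}. mu i)"
proof -
  have "expectation S = expectation (\<lambda>\<omega>. (\<Sum>i\<in>{1..n}. Y i \<omega>) + (\<Sum>i\<in>{1..n}. mu i))"
    unfolding S_eq ..
  also have "\<dots> = (\<Sum>i\<in>{1..n}. mu i)"
    using sumY[of "{1..n}"] by (simp add: Bochner_Integration.integral_add prob_space)
  finally show ?thesis .
qed

lemma VS: "variance S = V"
  using sumY[of "{1..n}"] unfolding ES S_eq V_def by simp

end




lemma exp_neg_bound: fixes a :: real assumes "0 \<le> a" "a \<le> 1" shows "\<bar>1 - a - exp (-a)\<bar> \<le> a^2"
proof -
  have l: "1 - a \<le> exp (-a)" using exp_ge_add_one_self[of "-a"] by simp
  have q: "1 + a + a^2/2 \<le> exp a" by (rule exp_lower_Taylor_quadratic) fact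
  have p: "0 < 1 + a + a^2/2" using assms by (simp add: add_pos_nonneg)
  have "1 \<le> (1 - a + a^2) * (1 + a + a^2/2)"
  proof -
    have "(1 - a + a^2) * (1 + a + a^2/2) = 1 + a^2/2 + a^3/2 + a^4/2"
      by (simp add: power2_eq_square power3_eq_cube power4_eq_xxxx field_simps)
    then show ?thesis using assms by simp
  qed
  moreover have "0 \<le> 1 - a + a^2" using assms by (smt (verit) zero_le_power2)
  ultimately have "1 \<le> (1 - a + a^2) * exp a"
    by (smt (verit) mult_left_mono q)
  then have "exp (-a) \<le> 1 - a + a^2"
    by (simp add: exp_minus field_simps)
  then show ?thesis using l by simp
qed

lemma iexp2: "cmod (iexp x - (complex_of_real (1 - x^2/2) + \<i> * complex_of_real x)) \<le> \<bar>x\<bar>^3 / 6"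
proof -
  have "(\<Sum>k\<le>2. (\<i> * complex_of_real x)^k / fact k) = complex_of_real (1 - x^2/2) + \<i> * complex_of_real x"
    by (simp add: eval_nat_numeral complex_eq_iff power2_eq_square)
  moreover have "(fact (Suc 2) :: real) = 6" by (simp add: eval_nat_numeral)
  ultimately show ?thesis using iexp_approx1[of x 2] by simp
qed

lemma iexp1: "cmod (iexp x - (1 + \<i> * complex_of_real x)) \<le> x^2 / 2"
proof -
  have "(\<Sum>k\<le>1. (\<i> * complex_of_real x)^k / fact k) = 1 + \<i> * complex_of_real x"
    by simp
  then show ?thesis using iexp_approx1[of x 1] by (simp add: eval_nat_numeral)
qed




lemma phi_norm: assumes "D \<ge> 1" shows "norm (phi D s) \<le> 1"
proof -
  define f where "f k = iexp (s * (real_of_int k - (real_of_int D - 1)/2))" for k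
  have "norm (phi D s) = inverse (real_of_int D) * norm (\<Sum>k\<in>{0..<D}. f k)"
    unfolding phi_def f_def[symmetric] using assms by simp
  also have "\<dots> \<le> inverse (real_of_int D) * (\<Sum>k\<in>{0..<D}. norm (f k))"
    using assms by (intro mult_left_mono norm_sum) auto
  also have "inverse (real_of_int D) * (\<Sum>k\<in>{0..<D}. norm (f k)) = inverse (real_of_int D) * real (card {0..<D})"
    unfolding f_def by (simp del: of_real_mult of_real_diff)
  also have "\<dots> = 1" using assms by simp
  finally show ?thesis .
qed

lemma phi_approx:
  assumes D: "D \<ge> 1"
  shows "norm (phi D s - complex_of_real (1 - s^2 * (((real_of_int D)^2 - 1)/12) / 2))
     \<le> \<bar>s\<bar>^3 * real_of_int D * (((real_of_int D)^2 - 1)/12) / 12"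
proof -
  define y where "y k = real_of_int k - (real_of_int D - 1)/2" for k :: int
  define T where "T k = complex_of_real (1 - (s * y k)^2/2) + \<i> * complex_of_real (s * y k)" for k
  have Dr: "real_of_int D > 0" using D by simp
  have sy: "(\<Sum>k\<in>{0..<D}. y k) = 0" unfolding y_def using U0[of D] D by simp
  have sy2: "(\<Sum>k\<in>{0..<D}. (y k)^2) = real_of_int D * ((real_of_int D)^2 - 1) / 12"
    unfolding y_def using U2[of D] D by simp
  have "(\<Sum>k\<in>{0..<D}. T k) = complex_of_real (\<Sum>k\<in>{0..<D}. (1 - (s * y k)^2/2)) + \<i> * complex_of_real (s * (\<Sum>k\<in>{0..<D}. y k))"
    unfolding T_def by (simp add: sum.distrib sum_distrib_left)
  also have "(\<Sum>k\<in>{0..<D}. (1 - (s * y k)^2/2)) = real_of_int D - s^2/2 * (\<Sum>k\<in>{0..<D}. (y k)^2)"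
    using D by (simp add: sum_subtractf sum_distrib_left power_mult_distrib sum_divide_distrib)
  finally have sT: "inverse (real_of_int D) *\<^sub>R (\<Sum>k\<in>{0..<D}. T k) = complex_of_real (1 - s^2 * (((real_of_int D)^2 - 1)/12) / 2)"
    unfolding sy sy2 using Dr by (simp add: scaleR_conv_of_real field_simps)
  have "phi D s - complex_of_real (1 - s^2 * (((real_of_int D)^2 - 1)/12) / 2)
      = inverse (real_of_int D) *\<^sub>R (\<Sum>k\<in>{0..<D}. iexp (s * y k) - T k)"
    unfolding phi_def sT[symmetric] y_def by (simp add: sum_subtractf scaleR_diff_right)
  also have "norm \<dots> \<le> inverse (real_of_int D) * (\<Sum>k\<in>{0..<D}. \<bar>s * y k\<bar>^3 / 6)"
    using Dr by (auto intro!: mult_left_mono sum_norm_le order_trans[OF _ iexp2] simp: T_def)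
  also have "\<dots> \<le> inverse (real_of_int D) * (\<Sum>k\<in>{0..<D}. \<bar>s\<bar>^3 * (real_of_int D / 2) * (y k)^2 / 6)"
  proof (intro mult_left_mono sum_mono)
    fix k assume k: "k \<in> {0..<D}"
    have "real_of_int k \<le> real_of_int D - 1" "0 \<le> real_of_int k" using k by auto
    then have a1: "y k \<le> real_of_int D / 2" unfolding y_def by (simp add: field_simps)
    have a2: "- y k \<le> real_of_int D / 2" using \<open>0 \<le> real_of_int k\<close> unfolding y_def by (simp add: field_simps)
    from a1 a2 have "\<bar>y k\<bar> \<le> real_of_int D / 2" by (simp only: abs_le_iff)
    moreover have "\<bar>y k\<bar>^3 = \<bar>y k\<bar> * (y k)^2"
      by (simp add: power3_eq_cube power2_eq_square)
    ultimately have "\<bar>y k\<bar>^3 \<le> (real_of_int D / 2) * (y k)^2"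
      using mult_right_mono[of "\<bar>y k\<bar>" "real_of_int D / 2" "(y k)^2"] by simp
    then show "\<bar>s * y k\<bar>^3 / 6 \<le> \<bar>s\<bar>^3 * (real_of_int D / 2) * (y k)^2 / 6"
      using mult_left_mono[of "\<bar>y k\<bar>^3" "(real_of_int D / 2) * (y k)^2" "\<bar>s\<bar>^3"]
      by (simp add: abs_mult power_mult_distrib mult.assoc)
  qed (use Dr in auto)
  also have "\<dots> = \<bar>s\<bar>^3 * real_of_int D * (((real_of_int D)^2 - 1)/12) / 12"
    using Dr by (simp add: sum_distrib_left[symmetric] sum_divide_distrib[symmetric] sy2 field_simps)
  finally show ?thesis .
qed

lemma fq: "inverse a * (c / (b/2)) = c / (a * b / 2)" for a b c :: real
  by (cases "a = 0"; cases "b = 0") (auto simp: field_simps)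

lemma phi_small:
  assumes D: "D \<ge> 1" and s: "s \<noteq> 0" "\<bar>s\<bar> \<le> 1"
  shows "norm (phi D s) \<le> norm (1 - iexp (real_of_int D * s)) / (real_of_int D * \<bar>s\<bar> / 2)"
proof -
  obtain N where N: "D = int N" using D by (metis nonneg_int_cases order_trans zero_le_one)
  have N1: "N \<ge> 1" using D N by simp
  define z where "z = iexp s"
  have "(\<Sum>k\<in>{0..<D}. iexp (s * (real_of_int k - (real_of_int D - 1)/2)))
       = (\<Sum>j<N. iexp (- s * ((real N - 1)/2)) * z^j)"
    unfolding N sum_int_nat z_def
    by (intro sum.cong refl) (simp add: exp_add[symmetric] exp_of_nat_mult[symmetric] field_simps)
  also have "\<dots> = iexp (- s * ((real N - 1)/2)) * (\<Sum>j<N. z^j)"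
    by (simp add: sum_distrib_left)
  finally have e: "phi D s = inverse (real N) *\<^sub>R (iexp (- s * ((real N - 1)/2)) * (\<Sum>j<N. z^j))"
    unfolding phi_def N by simp
  have lb: "\<bar>s\<bar> / 2 \<le> norm (1 - z)"
  proof -
    have "\<i> * complex_of_real s = (iexp s - 1) - (iexp s - (1 + \<i> * complex_of_real s))"
      by simp
    then have "norm (\<i> * complex_of_real s) \<le> norm (iexp s - 1) + norm (iexp s - (1 + \<i> * complex_of_real s))"
      by (metis norm_triangle_ineq4)
    also have "norm (iexp s - 1) = norm (1 - z)" unfolding z_def by (rule norm_minus_commute)
    finally have "norm (\<i> * complex_of_real s) \<le> norm (iexp s - (1 + \<i> * complex_of_real s)) + norm (1 - z)"
      by simp
    moreover have "s^2/2 \<le> \<bar>s\<bar> / 2"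
    proof -
      have "s^2 = \<bar>s\<bar> * \<bar>s\<bar>" by (simp add: power2_eq_square)
      also have "\<dots> \<le> \<bar>s\<bar>" using s(2) by (metis abs_ge_zero mult_left_le_one_le)
      finally show ?thesis by simp
    qed
    ultimately show ?thesis using iexp1[of s] by (simp add: norm_mult)
  qed
  then have z1: "z \<noteq> 1" using s by auto
  have zN: "z^N = iexp (real_of_int D * s)"
    unfolding z_def N by (simp add: exp_of_nat_mult[symmetric] algebra_simps)
  have "norm (phi D s) = inverse (real N) * (norm (1 - z^N) / norm (1 - z))"
    unfolding e sum_gp_strict using z1 by (simp add: norm_mult norm_divide)
  also have "\<dots> \<le> inverse (real N) * (norm (1 - z^N) / (\<bar>s\<bar> / 2))"
  proof -
    have "0 < \<bar>s\<bar> / 2" using s by simp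
    then have "0 < norm (1 - z) * (\<bar>s\<bar> / 2)" using lb by (intro mult_pos_pos) auto
    then show ?thesis using lb by (intro mult_left_mono divide_left_mono) auto
  qed
  also have "\<dots> = norm (1 - iexp (real_of_int D * s)) / (real_of_int D * \<bar>s\<bar> / 2)"
    unfolding zN N of_int_of_nat_eq by (rule fq)
  finally show ?thesis .
qed




context urow begin

lemma charW:
  assumes Vpos: "V > 0"
  shows "char (distr M borel (\<lambda>\<omega>. (S \<omega> - expectation S) / sqrt (variance S))) t
     = (\<Prod>i\<in>{1..n}. phi (d i) (t / sqrt V))"
proof -
  have W: "(\<lambda>\<omega>. (S \<omega> - expectation S) / sqrt (variance S)) = (\<lambda>\<omega>. \<Sum>i\<in>{1..n}. Y i \<omega> / sqrt V)"
    unfolding VS unfolding ES unfolding S_eq by (simp add: sum_divide_distrib)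
  have ind2: "indep_vars (\<lambda>_. borel) (\<lambda>i \<omega>. Y i \<omega> / sqrt V) {1..n}"
    by (rule indep_vars_compose2[OF indY, where Y="\<lambda>i x. x / sqrt V"]) auto
  have "char (distr M borel (\<lambda>\<omega>. \<Sum>i\<in>{1..n}. Y i \<omega> / sqrt V)) t
      = (\<Prod>i\<in>{1..n}. char (distr M borel (\<lambda>\<omega>. Y i \<omega> / sqrt V)) t)"
    by (rule char_distr_sum[OF ind2])
  also have "\<dots> = (\<Prod>i\<in>{1..n}. phi (d i) (t / sqrt V))"
  proof (rule prod.cong[OF refl])
    fix i assume i: "i \<in> {1..n}"
    have "char (distr M borel (\<lambda>\<omega>. Y i \<omega> / sqrt V)) t = integral\<^sup>L M (\<lambda>\<omega>. iexp (t * (Y i \<omega> / sqrt V)))"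
      unfolding char_def using i by (subst integral_distr) auto
    also have "\<dots> = integral\<^sup>L M (\<lambda>\<omega>. (\<lambda>k. iexp ((t / sqrt V) * (real_of_int k - (real_of_int (d i) - 1)/2))) (X i \<omega>))"
      unfolding Y_def mu_def by simp
    also have "\<dots> = phi (d i) (t / sqrt V)"
      using Iint[OF i, of "\<lambda>k. iexp ((t / sqrt V) * (real_of_int k - (real_of_int (d i) - 1)/2))"]
      unfolding phi_def by simp
    finally show "char (distr M borel (\<lambda>\<omega>. Y i \<omega> / sqrt V)) t = phi (d i) (t / sqrt V)" .
  qed
  finally show ?thesis unfolding W .
qed

lemma realdW: "real_distribution (distr M borel (\<lambda>\<omega>. (S \<omega> - expectation S) / sqrt (variance S)))"
proof -
  have "S \<in> borel_measurable M"
    unfolding S_def using Xm by (intro borel_measurable_sum) (auto)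
  then show ?thesis by (intro real_distribution_distr) auto
qed

end




definition vv :: "int \<Rightarrow> real" where "vv D = ((real_of_int D)^2 - 1) / 12"

lemma vv_mono: "0 \<le> D \<Longrightarrow> D \<le> E \<Longrightarrow> vv D \<le> vv E"
  unfolding vv_def by (auto intro!: divide_right_mono power_mono)

lemma vv_ge: "2 \<le> D \<Longrightarrow> 1/4 \<le> vv D"
proof -
  assume "2 \<le> D"
  then have "(2::real)^2 \<le> (real_of_int D)^2" by (intro power_mono) auto
  then show ?thesis unfolding vv_def by simp
qed

lemma row_bound:
  fixes e :: "nat \<Rightarrow> int" and n :: nat and t :: real
  assumes n: "n \<ge> 1" and e: "\<And>i. i \<in> {1..n} \<Longrightarrow> 2 \<le> e i \<and> e i \<le> e n"
  defines "V \<equiv> (\<Sum>i\<in>{1..n}. vv (e i))"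
  assumes small: "t^2 * (vv (e n) / V) / 2 \<le> 1"
  shows "norm ((\<Prod>i\<in>{1..n}. phi (e i) (t / sqrt V)) - complex_of_real (exp (-(t^2)/2)))
    \<le> \<bar>t\<bar>^3 / 12 * sqrt (12 * (vv (e n) / V) + 1 / V) + t^4 / 4 * (vv (e n) / V)"
proof -
  have nn: "n \<in> {1..n}" using n by auto
  have vpos: "i \<in> {1..n} \<Longrightarrow> 1/4 \<le> vv (e i)" for i using e vv_ge by blast
  have "real n / 4 = (\<Sum>i\<in>{1..n}. 1/4)" by simp
  also have "\<dots> \<le> V" unfolding V_def by (intro sum_mono vpos)
  finally have Vge: "real n / 4 \<le> V" .
  then have Vpos: "V > 0" using n by (smt (verit) divide_pos_pos of_nat_0_less_iff zero_less_one less_le_trans)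
  define \<sigma> where "\<sigma> = sqrt V"
  have sig: "\<sigma> > 0" "\<sigma>^2 = V" using Vpos unfolding \<sigma>_def by auto
  define s where "s = t / \<sigma>"
  have s2: "s^2 = t^2 / V" unfolding s_def using sig by (simp add: power_divide)
  define a where "a i = s^2 * vv (e i) / 2" for i
  have a0: "i \<in> {1..n} \<Longrightarrow> 0 \<le> a i" for i using vpos[of i] unfolding a_def by (smt (verit) zero_le_power2 mult_nonneg_nonneg divide_nonneg_pos)
  have aan: "i \<in> {1..n} \<Longrightarrow> a i \<le> a n" for i
    unfolding a_def using e[of i] vv_mono[of "e i" "e n"] by (intro divide_right_mono mult_left_mono) auto
  have an: "a n = t^2 * (vv (e n) / V) / 2" unfolding a_def s2 by simp
  have a1: "i \<in> {1..n} \<Longrightarrow> a i \<le> 1" for i using aan[of i] small an by simp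
  have suma: "(\<Sum>i\<in>{1..n}. a i) = t^2 / 2"
  proof -
    have "(\<Sum>i\<in>{1..n}. a i) = s^2 / 2 * V" unfolding a_def V_def
      by (simp add: sum_distrib_left sum_divide_distrib)
    then show ?thesis using Vpos by (simp add: s2)
  qed
  have p1: "norm ((\<Prod>i\<in>{1..n}. phi (e i) s) - (\<Prod>i\<in>{1..n}. complex_of_real (1 - a i)))
      \<le> (\<Sum>i\<in>{1..n}. norm (phi (e i) s - complex_of_real (1 - a i)))"
  proof (rule norm_prod_diff)
    fix i assume i: "i \<in> {1..n}"
    show "norm (phi (e i) s) \<le> 1" using e[OF i] by (intro phi_norm) auto
    have "norm (complex_of_real (1 - a i)) = \<bar>1 - a i\<bar>" by (rule norm_of_real)
    also have "\<dots> \<le> 1" using a0[OF i] a1[OF i] by simp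
    finally show "norm (complex_of_real (1 - a i)) \<le> 1" .
  qed
  also have "\<dots> \<le> (\<Sum>i\<in>{1..n}. \<bar>s\<bar>^3 * real_of_int (e n) * vv (e i) / 12)"
  proof (rule sum_mono)
    fix i assume i: "i \<in> {1..n}"
    have "norm (phi (e i) s - complex_of_real (1 - a i)) \<le> \<bar>s\<bar>^3 * real_of_int (e i) * vv (e i) / 12"
      using phi_approx[of "e i" s] e[OF i] unfolding a_def vv_def by simp
    also have "\<dots> \<le> \<bar>s\<bar>^3 * real_of_int (e n) * vv (e i) / 12"
      using e[OF i] vpos[OF i] by (intro divide_right_mono mult_right_mono mult_left_mono) auto
    finally show "norm (phi (e i) s - complex_of_real (1 - a i)) \<le> \<bar>s\<bar>^3 * real_of_int (e n) * vv (e i) / 12" .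
  qed
  also have "\<dots> = \<bar>s\<bar>^3 * real_of_int (e n) * V / 12"
    unfolding V_def by (simp add: sum_divide_distrib[symmetric] sum_distrib_left[symmetric])
  also have "\<dots> = \<bar>t\<bar>^3 / 12 * sqrt (12 * (vv (e n) / V) + 1 / V)"
  proof -
    have en: "real_of_int (e n) \<ge> 0" using e[OF nn] by simp
    have "12 * (vv (e n) / V) + 1 / V = (real_of_int (e n))^2 / V"
      unfolding vv_def using Vpos by (simp add: field_simps)
    then have h1: "sqrt (12 * (vv (e n) / V) + 1 / V) = real_of_int (e n) / \<sigma>"
      unfolding \<sigma>_def using en by (simp add: real_sqrt_divide)
    have h2: "\<bar>s\<bar>^3 * V = \<bar>t\<bar>^3 / \<sigma>"
      unfolding s_def sig(2)[symmetric] using sig(1) by (simp add: power_divide abs_divide power2_eq_square power3_eq_cube)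
    have "\<bar>s\<bar>^3 * real_of_int (e n) * V / 12 = real_of_int (e n) * (\<bar>s\<bar>^3 * V) / 12"
      by (simp add: mult_ac)
    also have "\<dots> = \<bar>t\<bar>^3 / 12 * (real_of_int (e n) / \<sigma>)" unfolding h2 by (simp add: mult_ac)
    finally show ?thesis unfolding h1 .
  qed
  finally have P1: "norm ((\<Prod>i\<in>{1..n}. phi (e i) s) - (\<Prod>i\<in>{1..n}. complex_of_real (1 - a i)))
      \<le> \<bar>t\<bar>^3 / 12 * sqrt (12 * (vv (e n) / V) + 1 / V)" .
  have "norm ((\<Prod>i\<in>{1..n}. (1 - a i)) - (\<Prod>i\<in>{1..n}. exp (- a i)))
      \<le> (\<Sum>i\<in>{1..n}. norm ((1 - a i) - exp (- a i)))"
    by (rule norm_prod_diff) (use a0 a1 in \<open>auto simp: abs_le_iff\<close>)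
  also have "\<dots> \<le> (\<Sum>i\<in>{1..n}. a i * a n)"
  proof (rule sum_mono)
    fix i assume i: "i \<in> {1..n}"
    have "norm ((1 - a i) - exp (- a i)) \<le> (a i)^2" using exp_neg_bound[OF a0[OF i] a1[OF i]] by simp
    also have "\<dots> \<le> a i * a n" unfolding power2_eq_square using a0[OF i] aan[OF i] by (simp add: mult_left_mono)
    finally show "norm ((1 - a i) - exp (- a i)) \<le> a i * a n" .
  qed
  also have "\<dots> = (\<Sum>i\<in>{1..n}. a i) * a n" by (simp only: sum_distrib_right)
  also have "\<dots> = t^4 / 4 * (vv (e n) / V)"
    unfolding suma an by (simp add: power4_eq_xxxx power2_eq_square)
  finally have P2: "norm ((\<Prod>i\<in>{1..n}. (1 - a i)) - (\<Prod>i\<in>{1..n}. exp (- a i))) \<le> t^4 / 4 * (vv (e n) / V)" .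
  have P3: "(\<Prod>i\<in>{1..n}. exp (- a i)) = exp (-(t^2)/2)"
  proof -
    have "(\<Prod>i\<in>{1..n}. exp (- a i)) = exp (\<Sum>i\<in>{1..n}. - a i)" by (rule exp_sum[symmetric]) simp
    also have "(\<Sum>i\<in>{1..n}. - a i) = - (t^2 / 2)" by (simp only: sum_negf suma finite_atLeastAtMost)
    finally show ?thesis by simp
  qed
  have "norm ((\<Prod>i\<in>{1..n}. phi (e i) s) - complex_of_real (exp (-(t^2)/2)))
     \<le> norm ((\<Prod>i\<in>{1..n}. phi (e i) s) - (\<Prod>i\<in>{1..n}. complex_of_real (1 - a i)))
       + norm ((\<Prod>i\<in>{1..n}. complex_of_real (1 - a i)) - complex_of_real (exp (-(t^2)/2)))"
    by (rule norm_diff_triangle_ineq[THEN order_trans[rotated]]) simp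
  also have "norm ((\<Prod>i\<in>{1..n}. complex_of_real (1 - a i)) - complex_of_real (exp (-(t^2)/2)))
      = norm ((\<Prod>i\<in>{1..n}. (1 - a i)) - (\<Prod>i\<in>{1..n}. exp (- a i)))"
    unfolding P3 of_real_prod[symmetric] of_real_diff[symmetric] norm_of_real by simp
  finally show ?thesis using P1 P2 unfolding s_def \<sigma>_def by linarith
qed




definition VV :: "(nat \<Rightarrow> nat \<Rightarrow> int) \<Rightarrow> nat \<Rightarrow> real" where
  "VV d n = (\<Sum>i\<in>{1..n}. vv (d n i))"
definition rr :: "(nat \<Rightarrow> nat \<Rightarrow> int) \<Rightarrow> nat \<Rightarrow> real" where
  "rr d n = vv (d n n) / VV d n"

locale dseq =
  fixes d :: "nat \<Rightarrow> nat \<Rightarrow> int"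
  assumes H: "\<And>n i. 1 \<le> n \<Longrightarrow> i \<in> {1..n} \<Longrightarrow> 2 \<le> d n i \<and> d n i \<le> d n n"
begin

lemma VV_ge: "1 \<le> n \<Longrightarrow> real n / 4 \<le> VV d n"
proof -
  assume n: "1 \<le> n"
  have "real n / 4 = (\<Sum>i\<in>{1..n}. 1/4)" by simp
  also have "\<dots> \<le> VV d n" unfolding VV_def using H[OF n] vv_ge by (intro sum_mono) blast
  finally show ?thesis .
qed

lemma VV_pos: "1 \<le> n \<Longrightarrow> 0 < VV d n"
  using VV_ge[of n] by (smt (verit) divide_pos_pos of_nat_0_less_iff zero_less_one less_le_trans)

lemma vv_nonneg: "1 \<le> n \<Longrightarrow> i \<in> {1..n} \<Longrightarrow> 0 \<le> vv (d n i)"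
proof -
  assume "1 \<le> n" "i \<in> {1..n}"
  then have "1/4 \<le> vv (d n i)" using H vv_ge by blast
  then show ?thesis by simp
qed

lemma vv_le_VV: "1 \<le> n \<Longrightarrow> vv (d n n) \<le> VV d n"
proof -
  assume n: "1 \<le> n"
  have "\<forall>i\<in>{1..n}. 0 \<le> vv (d n i)" using vv_nonneg[OF n] by blast
  then show ?thesis unfolding VV_def using n by (intro member_le_sum) auto
qed

lemma rr_bounds: "0 \<le> rr d n \<and> rr d n \<le> 1"
proof (cases "n = 0")
  case True then show ?thesis by (simp add: rr_def VV_def)
next
  case False
  then have n: "1 \<le> n" by simp
  have "0 \<le> vv (d n n)" using vv_nonneg[OF n, of n] n by simp
  then show ?thesis unfolding rr_def using vv_le_VV[OF n] VV_pos[OF n] by (simp add: divide_le_eq_1)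
qed

lemma rr0: "rr d 0 = 0" by (simp add: rr_def VV_def)

lemma invVV: "(\<lambda>n. 1 / VV d n) \<longlonglongrightarrow> 0"
proof (rule Lim_null_comparison)
  show "\<forall>\<^sub>F n in sequentially. norm (1 / VV d n) \<le> 4 * (1 / real n)"
    using eventually_ge_at_top[of 1]
  proof eventually_elim
    case (elim n)
    have "real n / 4 \<le> VV d n" "0 < VV d n" using VV_ge VV_pos elim by auto
    then show ?case using elim by (simp add: field_simps)
  qed
  show "(\<lambda>n. 4 * (1 / real n)) \<longlonglongrightarrow> 0"
    by (intro tendsto_mult_right_zero lim_const_over_n)
qed

lemma Dsig: "1 \<le> n \<Longrightarrow> real_of_int (d n n) / sqrt (VV d n) = sqrt (12 * rr d n + 1 / VV d n)"
proof -
  assume n: "1 \<le> n"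
  have en: "real_of_int (d n n) \<ge> 0" using H[OF n, of n] n by simp
  have "12 * rr d n + 1 / VV d n = (real_of_int (d n n))^2 / VV d n"
    unfolding rr_def vv_def using VV_pos[OF n] by (simp add: field_simps)
  then show ?thesis using en by (simp add: real_sqrt_divide)
qed

lemma fwd:
  assumes r: "rr d \<longlonglongrightarrow> 0"
  shows "(\<lambda>n. \<Prod>i\<in>{1..n}. phi (d n i) (t / sqrt (VV d n))) \<longlonglongrightarrow> complex_of_real (exp (-(t^2)/2))"
proof (rule LIM_zero_cancel, rule Lim_null_comparison)
  define B where "B n = \<bar>t\<bar>^3 / 12 * sqrt (12 * rr d n + 1 / VV d n) + t^4 / 4 * rr d n" for n
  have "(\<lambda>n. 12 * rr d n + 1 / VV d n) \<longlonglongrightarrow> 12 * 0 + 0"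
    by (intro tendsto_intros r invVV)
  from tendsto_real_sqrt[OF this] have sq: "(\<lambda>n. sqrt (12 * rr d n + 1 / VV d n)) \<longlonglongrightarrow> 0"
    by simp
  have "B \<longlonglongrightarrow> \<bar>t\<bar>^3 / 12 * 0 + t^4 / 4 * 0"
    unfolding B_def by (intro tendsto_add tendsto_mult_left sq r)
  then show "B \<longlonglongrightarrow> 0" by simp
  have "(\<lambda>n. t^2 * rr d n / 2) \<longlonglongrightarrow> t^2 * 0 / 2" by (intro tendsto_intros r) simp
  then have "\<forall>\<^sub>F n in sequentially. t^2 * rr d n / 2 < 1" by (rule order_tendstoD(2)) simp
  then show "\<forall>\<^sub>F n in sequentially. norm ((\<Prod>i\<in>{1..n}. phi (d n i) (t / sqrt (VV d n))) - complex_of_real (exp (-(t^2)/2))) \<le> B n"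
    using eventually_ge_at_top[of 1]
  proof eventually_elim
    case (elim n)
    show ?case unfolding B_def VV_def rr_def
      by (rule row_bound) (use elim H in \<open>auto simp: VV_def rr_def\<close>)
  qed
qed

end




lemma norm_prod_le_one:
  fixes z :: "nat \<Rightarrow> complex"
  assumes "finite A" "j \<in> A" "\<And>i. i \<in> A \<Longrightarrow> norm (z i) \<le> 1"
  shows "norm (\<Prod>i\<in>A. z i) \<le> norm (z j)"
proof -
  have "norm (\<Prod>i\<in>A. z i) = (\<Prod>i\<in>A. norm (z i))" by (simp add: prod_norm)
  also have "\<dots> = norm (z j) * (\<Prod>i\<in>A - {j}. norm (z i))" using assms by (simp add: prod.remove)
  also have "\<dots> \<le> norm (z j) * 1"
    using assms by (intro mult_left_mono prod_le_1) auto
  finally show ?thesis by simp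
qed

lemma iexp_2pi: "exp (\<i> * (2 * complex_of_real pi)) = 1"
  using exp_two_pi_i by (simp add: mult_ac)

context dseq begin

lemma bwd:
  assumes conv: "\<And>t. (\<lambda>n. \<Prod>i\<in>{1..n}. phi (d n i) (t / sqrt (VV d n))) \<longlonglongrightarrow> complex_of_real (exp (-(t^2)/2))"
  shows "rr d \<longlonglongrightarrow> 0"
proof (rule ccontr)
  assume nc: "\<not> rr d \<longlonglongrightarrow> 0"
  then obtain e where e: "e > 0" "\<not> (\<forall>\<^sub>F n in sequentially. dist (rr d n) 0 < e)"
    unfolding tendsto_iff by blast
  then have "\<exists>\<^sub>F n in sequentially. \<not> dist (rr d n) 0 < e" by (simp add: not_eventually)
  then have "\<exists>\<^sub>F n in sequentially. e \<le> rr d n" using rr_bounds by (simp add: not_less)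
  then have inf: "infinite {n. e \<le> rr d n}" by (simp add: frequently_cofinite[symmetric] cofinite_eq_sequentially)
  define S where "S = {n. e \<le> rr d n}"
  define g where "g = enumerate S"
  have gm: "strict_mono g" unfolding g_def using inf S_def by (simp add: strict_mono_enumerate)
  have gS: "e \<le> rr d (g k)" for k using enumerate_in_set[OF inf] unfolding g_def S_def by blast
  have "seq_compact {e..1::real}" by (rule compact_imp_seq_compact) simp
  moreover have "\<forall>k. (rr d \<circ> g) k \<in> {e..1}" using gS rr_bounds by auto
  ultimately obtain c h where c: "c \<in> {e..1}" and hm: "strict_mono (h :: nat \<Rightarrow> nat)"
    and ch: "((rr d \<circ> g) \<circ> h) \<longlonglongrightarrow> c"
    by (rule seq_compactE)
  define m where "m = g \<circ> h"
  have mm: "strict_mono m" unfolding m_def using gm hm by (rule strict_mono_o)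
  have rm: "(\<lambda>k. rr d (m k)) \<longlonglongrightarrow> c" using ch unfolding m_def by (simp add: comp_def)
  have m1: "1 \<le> m k" for k
  proof -
    have "e \<le> rr d (m k)" unfolding m_def using gS by simp
    then show ?thesis using e(1) rr0 by (cases "m k") auto
  qed
  have cpos: "c > 0" using c e by auto
  define t0 where "t0 = 2 * pi / sqrt (12 * c)"
  have t0pos: "t0 > 0" unfolding t0_def using cpos by simp
  have t0c: "t0 * sqrt (12 * c) = 2 * pi" unfolding t0_def using cpos by simp
  define P where "P n = (\<Prod>i\<in>{1..n}. phi (d n i) (t0 / sqrt (VV d n)))" for n
  define L where "L = complex_of_real (exp (-(t0^2)/2))"
  have PL: "(\<lambda>k. P (m k)) \<longlonglongrightarrow> L"
    using LIMSEQ_subseq_LIMSEQ[OF conv[of t0] mm] unfolding P_def L_def by (simp add: comp_def)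
  have iVm: "(\<lambda>k. 1 / VV d (m k)) \<longlonglongrightarrow> 0"
    using LIMSEQ_subseq_LIMSEQ[OF invVV mm] by (simp add: comp_def)
  define s where "s k = t0 / sqrt (VV d (m k))" for k
  define x where "x k = real_of_int (d (m k) (m k)) * s k" for k
  have s_eq: "s k = t0 * sqrt (1 / VV d (m k))" for k
    unfolding s_def by (simp add: real_sqrt_inverse divide_inverse)
  have s0: "s \<longlonglongrightarrow> 0"
  proof -
    have "(\<lambda>k. t0 * sqrt (1 / VV d (m k))) \<longlonglongrightarrow> t0 * sqrt 0"
      by (intro tendsto_mult_left tendsto_real_sqrt iVm)
    then show ?thesis unfolding s_eq[abs_def] by simp
  qed
  have x_eq: "x k = t0 * sqrt (12 * rr d (m k) + 1 / VV d (m k))" for k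
  proof -
    have "x k = t0 * (real_of_int (d (m k) (m k)) / sqrt (VV d (m k)))"
      unfolding x_def s_def by simp
    then show ?thesis unfolding Dsig[OF m1[of k]] .
  qed
  have x2pi: "x \<longlonglongrightarrow> 2 * pi"
  proof -
    have "(\<lambda>k. 12 * rr d (m k) + 1 / VV d (m k)) \<longlonglongrightarrow> 12 * c + 0"
      by (intro tendsto_add tendsto_mult_left rm iVm)
    then have "(\<lambda>k. t0 * sqrt (12 * rr d (m k) + 1 / VV d (m k))) \<longlonglongrightarrow> t0 * sqrt (12 * c + 0)"
      by (intro tendsto_mult_left tendsto_real_sqrt)
    then show ?thesis unfolding x_eq[abs_def] using t0c by simp
  qed
  define B where "B k = norm (1 - iexp (x k)) / (\<bar>x k\<bar> / 2)" for k
  have B0: "B \<longlonglongrightarrow> 0"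
  proof -
    have "B \<longlonglongrightarrow> norm (1 - iexp (2 * pi)) / (\<bar>2 * pi\<bar> / 2)"
      unfolding B_def by (intro tendsto_intros x2pi) (use pi_gt_zero in auto)
    then show ?thesis by (simp add: iexp_2pi)
  qed
  have evB: "\<forall>\<^sub>F k in sequentially. norm (P (m k)) \<le> B k"
  proof -
    have "\<forall>\<^sub>F k in sequentially. \<bar>s k\<bar> < 1"
      using s0 by (rule order_tendstoD(2)[OF tendsto_rabs_zero]) simp
    then show ?thesis
    proof eventually_elim
      case (elim k)
      let ?n = "m k"
      have n1: "1 \<le> ?n" by (rule m1)
      have Vp: "0 < VV d ?n" by (rule VV_pos[OF n1])
      have sne: "s k \<noteq> 0" unfolding s_def using t0pos Vp by simp
      have D1: "1 \<le> d ?n ?n" using H[OF n1, of ?n] n1 by simp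
      have "norm (P ?n) \<le> norm (phi (d ?n ?n) (s k))"
        unfolding P_def s_def
      proof (rule norm_prod_le_one)
        fix i assume i: "i \<in> {1..?n}"
        have "2 \<le> d ?n i" using H[OF n1 i] by simp
        then show "norm (phi (d ?n i) (t0 / sqrt (VV d ?n))) \<le> 1" by (intro phi_norm) simp
      qed (use n1 in auto)
      also have "\<dots> \<le> norm (1 - iexp (real_of_int (d ?n ?n) * s k)) / (real_of_int (d ?n ?n) * \<bar>s k\<bar> / 2)"
        using elim sne D1 by (intro phi_small) auto
      also have "\<dots> = B k"
        unfolding B_def x_def using D1 by (simp add: abs_mult)
      finally show ?case .
    qed
  qed
  have "(\<lambda>k. P (m k)) \<longlonglongrightarrow> 0"
    by (rule Lim_null_comparison[OF evB B0])
  then have "(\<lambda>k. norm (P (m k))) \<longlonglongrightarrow> norm (0::complex)" by (rule tendsto_norm)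
  moreover have "(\<lambda>k. norm (P (m k))) \<longlonglongrightarrow> norm L" using PL by (rule tendsto_norm)
  ultimately have "norm L = 0" using LIMSEQ_unique by fastforce
  then show False unfolding L_def by simp
qed

end




context urow begin

lemma V_eq: "V = (\<Sum>i\<in>{1..n}. vv (d i))" unfolding V_def v_def vv_def ..

lemma S_fun: "S = (\<lambda>\<omega>. \<Sum>i\<in>{1..n}. real_of_int (X i \<omega>))" by (rule ext) (simp add: S_def)

lemma var_sum: "variance (\<lambda>\<omega>. \<Sum>i\<in>{1..n}. real_of_int (X i \<omega>)) = (\<Sum>i\<in>{1..n}. vv (d i))"
  using VS unfolding S_fun V_eq .

lemma char_main:
  assumes "0 < (\<Sum>i\<in>{1..n}. vv (d i))"
  shows "char (distr M borel (\<lambda>\<omega>. ((\<Sum>i\<in>{1..n}. real_of_int (X i \<omega>)) - expectation (\<lambda>\<omega>. \<Sum>i\<in>{1..n}. real_of_int (X i \<omega>)))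
            / sqrt (variance (\<lambda>\<omega>. \<Sum>i\<in>{1..n}. real_of_int (X i \<omega>))))) t
     = (\<Prod>i\<in>{1..n}. phi (d i) (t / sqrt (\<Sum>i\<in>{1..n}. vv (d i))))"
  using charW[of t] assms unfolding S_fun V_eq by simp

lemma realdW': "real_distribution (distr M borel (\<lambda>\<omega>. ((\<Sum>i\<in>{1..n}. real_of_int (X i \<omega>)) - expectation (\<lambda>\<omega>. \<Sum>i\<in>{1..n}. real_of_int (X i \<omega>)))
            / sqrt (variance (\<lambda>\<omega>. \<Sum>i\<in>{1..n}. real_of_int (X i \<omega>)))))"
  using realdW unfolding S_fun .

lemma max_var:
  assumes "1 \<le> n" "\<And>i. i \<in> {1..n} \<Longrightarrow> 0 \<le> d i \<and> d i \<le> d n"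
  shows "(MAX i\<in>{1..n}. variance (\<lambda>\<omega>. real_of_int (X i \<omega>))) = vv (d n)"
proof -
  have "(\<lambda>i. variance (\<lambda>\<omega>. real_of_int (X i \<omega>))) ` {1..n} = (\<lambda>i. vv (d i)) ` {1..n}"
    using VX unfolding v_def vv_def by (intro image_cong) auto
  moreover have "Max ((\<lambda>i. vv (d i)) ` {1..n}) = vv (d n)"
    using assms by (intro Max_eqI) (auto intro!: vv_mono)
  ultimately show ?thesis by simp
qed

end

lemma weak_conv_m_Suc: "weak_conv_m F N \<longleftrightarrow> weak_conv_m (\<lambda>m. F (Suc m)) N"
  unfolding weak_conv_m_def weak_conv_def
  using filterlim_sequentially_Suc[where f="\<lambda>n. cdf (F n) x" for x] by simp

theorem proposition6p12:
  fixes M :: "nat \<Rightarrow> 'a measure"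
    and X :: "nat \<Rightarrow> nat \<Rightarrow> 'a \<Rightarrow> int"
    and d :: "nat \<Rightarrow> nat \<Rightarrow> int"
  assumes d_ge2: "\<And>n. n \<ge> 1 \<Longrightarrow> 2 \<le> d n 1"
    and d_mono: "\<And>n i. 1 \<le> i \<Longrightarrow> i < n \<Longrightarrow> d n i \<le> d n (Suc i)"
    and prob: "\<And>n. n \<ge> 1 \<Longrightarrow> prob_space (M n)"
    and indep: "\<And>n. n \<ge> 1 \<Longrightarrow>
                  prob_space.indep_vars (M n) (\<lambda>_. count_space UNIV) (X n) {1..n}"
    and unif: "\<And>n i. 1 \<le> i \<Longrightarrow> i \<le> n \<Longrightarrow>
                  distr (M n) (count_space UNIV) (X n i) = measure_pmf (pmf_of_set {0..<d n i})"
  shows "satisfies_CLT M (\<lambda>n \<omega>. \<Sum>i\<in>{1..n}. real_of_int (X n i \<omega>)) \<longleftrightarrow>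
         maximum_condition M (\<lambda>n i \<omega>. real_of_int (X n i \<omega>))"
proof -
  have mono: "d n i \<le> d n j" if "1 \<le> i" "i \<le> j" "j \<le> n" for n i j
    using that
  proof (induction j)
    case 0 then show ?case by simp
  next
    case (Suc j)
    show ?case
    proof (cases "i = Suc j")
      case True then show ?thesis by simp
    next
      case False
      then have "i \<le> j" using Suc.prems by simp
      then have "d n i \<le> d n j" using Suc by simp
      also have "\<dots> \<le> d n (Suc j)" using d_mono[of j n] Suc.prems \<open>i \<le> j\<close> by simp
      finally show ?thesis .
    qed
  qed
  have Hd: "2 \<le> d n i \<and> d n i \<le> d n n" if "1 \<le> n" "i \<in> {1..n}" for n i
    using d_ge2[OF that(1)] mono[of 1 i n] mono[of i n n] that by auto
  interpret ds: dseq d by unfold_locales (rule Hd)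
  have U: "urow (M n) (X n) (d n) n" if n: "1 \<le> n" for n
  proof (intro urow.intro urow_axioms.intro)
    show "prob_space (M n)" by (rule prob[OF n])
    show "prob_space.indep_vars (M n) (\<lambda>_. count_space UNIV) (X n) {1..n}" by (rule indep[OF n])
    show "distr (M n) (count_space UNIV) (X n i) = measure_pmf (pmf_of_set {0..<d n i})" if "i \<in> {1..n}" for i
      using unif that by auto
    show "1 \<le> d n i" if "i \<in> {1..n}" for i using Hd[OF n that] by simp
  qed
  define Y where "Y n \<omega> = (\<Sum>i\<in>{1..n}. real_of_int (X n i \<omega>))" for n \<omega>
  define F where "F n = distr (M n) borel (\<lambda>\<omega>. (Y n \<omega> - prob_space.expectation (M n) (Y n))
                 / sqrt (prob_space.variance (M n) (Y n)))" for n
  define PP where "PP n t = (\<Prod>i\<in>{1..n}. phi (d n i) (t / sqrt (VV d n)))" for n t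
  have charF: "char (F n) t = PP n t" if n: "1 \<le> n" for n t
    unfolding F_def PP_def VV_def Y_def
    by (rule urow.char_main[OF U[OF n]]) (use ds.VV_pos[OF n] in \<open>simp add: VV_def\<close>)
  have rdF: "real_distribution (F (Suc m))" for m
    unfolding F_def Y_def by (rule urow.realdW'[OF U]) simp
  have "satisfies_CLT M (\<lambda>n \<omega>. \<Sum>i\<in>{1..n}. real_of_int (X n i \<omega>)) \<longleftrightarrow> weak_conv_m F std_normal_distribution"
    unfolding satisfies_CLT_def F_def Y_def ..
  also have "\<dots> \<longleftrightarrow> weak_conv_m (\<lambda>m. F (Suc m)) std_normal_distribution"
    by (rule weak_conv_m_Suc)
  also have "\<dots> \<longleftrightarrow> (\<forall>t. (\<lambda>m. char (F (Suc m)) t) \<longlonglongrightarrow> char std_normal_distribution t)"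
    using levy_continuity[where M="\<lambda>m. F (Suc m)", OF rdF real_dist_normal_dist]
      levy_continuity1[where M="\<lambda>m. F (Suc m)", OF rdF real_dist_normal_dist]
    by blast
  also have "\<dots> \<longleftrightarrow> (\<forall>t. (\<lambda>n. PP n t) \<longlonglongrightarrow> complex_of_real (exp (-(t^2)/2)))"
    unfolding char_std_normal_distribution charF[OF le_add2[of 1, unfolded add.commute[of _ 1] plus_1_eq_Suc]]
    using filterlim_sequentially_Suc[where f="\<lambda>n. PP n t" for t] by simp
  also have "\<dots> \<longleftrightarrow> rr d \<longlonglongrightarrow> 0"
    unfolding PP_def using ds.fwd ds.bwd by blast
  also have "\<dots> \<longleftrightarrow> maximum_condition M (\<lambda>n i \<omega>. real_of_int (X n i \<omega>))"
  proof -
    have eq: "(MAX i\<in>{1..Suc m}. prob_space.variance (M (Suc m)) (\<lambda>\<omega>. real_of_int (X (Suc m) i \<omega>)))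
            / prob_space.variance (M (Suc m)) (\<lambda>\<omega>. \<Sum>i\<in>{1..Suc m}. real_of_int (X (Suc m) i \<omega>)) = rr d (Suc m)" for m
    proof -
      have n: "1 \<le> Suc m" by simp
      have mv: "(MAX i\<in>{1..Suc m}. prob_space.variance (M (Suc m)) (\<lambda>\<omega>. real_of_int (X (Suc m) i \<omega>)))
          = vv (d (Suc m) (Suc m))"
        by (rule urow.max_var[OF U[OF n] n]) (use Hd[OF n] in force)
      have vs: "prob_space.variance (M (Suc m)) (\<lambda>\<omega>. \<Sum>i\<in>{1..Suc m}. real_of_int (X (Suc m) i \<omega>)) = VV d (Suc m)"
        using urow.var_sum[OF U[OF n]] unfolding VV_def .
      show ?thesis unfolding mv vs rr_def ..
    qed
    show ?thesis
      unfolding maximum_condition_def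
      using filterlim_sequentially_Suc[where f="rr d"]
        filterlim_sequentially_Suc[where f="\<lambda>n. (MAX i\<in>{1..n}. prob_space.variance (M n) (\<lambda>\<omega>. real_of_int (X n i \<omega>)))
            / prob_space.variance (M n) (\<lambda>\<omega>. \<Sum>i\<in>{1..n}. real_of_int (X n i \<omega>))"]
      unfolding eq by simp
  qed
  finally show ?thesis .
qed


end
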